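(* Under the setting described in the context, the sequence $\{u_n\}_{n\in\mathbb{N}}$ is bounded in $L^\infty((0,T)\times(0,L))$ for every $T>0$.
   Context: $L>0$. $\Phi\in C(\mathbb{R})\cap C^1(\mathbb{R}\setminus\{\pm1\})$ is constant on $(-\infty,-1]$ and on $[1,\infty)$, convex on $[-1,1]$, decreasing on $[-1,0]$, increasing on $[0,1]$; $u_0\in H^1(0,L)$, $u_1\in L^2(0,L)$. Sequences $\{u_{0,n}\},\{u_{1,n}\}\subset C^\infty([0,L])$, $\{\Phi_n\}\subset C^\infty(\mathbb{R})$ satisfy: $u_{0,n}\to u_0$ in $H^1(0,L)$, $u_{1,n}\to u_1$ in $L^2(0,L)$, $\Phi_n\to\Phi$ uniformly on $\mathbb{R}$; $\Phi_n'\to\Phi'$ pointwise on $\mathbb{R}$ and uniformly on $\mathbb{R}\setminus((-1-\varepsilon,-1+\varepsilon)\cup(1-\varepsilon,1+\varepsilon))$ for every $\varepsilon>0$; $\Phi_n'(u)=0$ whenever $|u|\ge1+\varepsilon$ (any $\varepsilon>0$, all $n$); there is $C>0$ independent of $n$ with $\|u_{0,n}\|_{H^1}\le C$, $\|u_{1,n}\|_{L^2}\le C$, $0\le\Phi_n,\Phi_n'\le C$; and $u_{0,n}'(0)=u_{0,n}'(L)=u_{1,n}(0)=u_{1,n}(L)=0$. For each $n$, $u_n$ is the (global) classical solution of $\partial_{tt}^2 u_n=\partial_{xx}^2 u_n-\Phi_n'(u_n)$ for $t>0$, $0<x<L$, with $\partial_x u_n(t,0)=\partial_x u_n(t,L)=0$,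 $u_n(0,\cdot)=u_{0,n}$, $\partial_t u_n(0,\cdot)=u_{1,n}$. *)

theory Defs
  imports "HOL-Analysis.Analysis"
begin

definition smooth_on :: "real set \<Rightarrow> (real \<Rightarrow> real) \<Rightarrow> bool" where
  "smooth_on S f \<longleftrightarrow> (\<exists>D :: nat \<Rightarrow> real \<Rightarrow> real.
      (\<forall>x\<in>S. D 0 x = f x) \<and>
      (\<forall>k. \<forall>x\<in>S. (D k has_real_derivative D (Suc k) x) (at x within S)))"

definition in_L2 :: "real \<Rightarrow> (real \<Rightarrow> real) \<Rightarrow> bool" where
  "in_L2 L f \<longleftrightarrow> set_borel_measurable lborel {0<..<L} f \<and>
                  set_integrable lborel {0<..<L} (\<lambda>x. (f x)\<^sup>2)"

definition L2_norm :: "real \<Rightarrow> (real \<Rightarrow> real) \<Rightarrow> real" where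
  "L2_norm L f = sqrt (LINT x:{0<..<L}|lborel. (f x)\<^sup>2)"

definition test_fun :: "real \<Rightarrow> (real \<Rightarrow> real) \<Rightarrow> bool" where
  "test_fun L \<phi> \<longleftrightarrow> smooth_on UNIV \<phi> \<and> closure {x. \<phi> x \<noteq> 0} \<subseteq> {0<..<L}"

definition weak_deriv :: "real \<Rightarrow> (real \<Rightarrow> real) \<Rightarrow> (real \<Rightarrow> real) \<Rightarrow> bool" where
  "weak_deriv L f g \<longleftrightarrow> (\<forall>\<phi>. test_fun L \<phi> \<longrightarrow>
      (LINT x:{0<..<L}|lborel. f x * deriv \<phi> x) = - (LINT x:{0<..<L}|lborel. g x * \<phi> x))"

definition in_H1_with :: "real \<Rightarrow> (real \<Rightarrow> real) \<Rightarrow> (real \<Rightarrow> real) \<Rightarrow> bool" where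
  "in_H1_with L f g \<longleftrightarrow> in_L2 L f \<and> in_L2 L g \<and> weak_deriv L f g"

definition in_H1 :: "real \<Rightarrow> (real \<Rightarrow> real) \<Rightarrow> bool" where
  "in_H1 L f \<longleftrightarrow> (\<exists>g. in_H1_with L f g)"

text \<open>H1 norm of a function that is classically differentiable on (0,L).\<close>
definition H1_norm_smooth :: "real \<Rightarrow> (real \<Rightarrow> real) \<Rightarrow> real" where
  "H1_norm_smooth L f = sqrt (LINT x:{0<..<L}|lborel. (f x)\<^sup>2 + (deriv f x)\<^sup>2)"

definition H1_converges :: "real \<Rightarrow> (nat \<Rightarrow> real \<Rightarrow> real) \<Rightarrow> (real \<Rightarrow> real) \<Rightarrow> bool" where
  "H1_converges L fs f \<longleftrightarrow> (\<exists>g. in_H1_with L f g \<and>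
     (\<lambda>n. LINT x:{0<..<L}|lborel. (fs n x - f x)\<^sup>2 + (deriv (fs n) x - g x)\<^sup>2)
        \<longlonglongrightarrow> 0)"

definition L2_converges :: "real \<Rightarrow> (nat \<Rightarrow> real \<Rightarrow> real) \<Rightarrow> (real \<Rightarrow> real) \<Rightarrow> bool" where
  "L2_converges L fs f \<longleftrightarrow> (\<lambda>n. LINT x:{0<..<L}|lborel. (fs n x - f x)\<^sup>2) \<longlonglongrightarrow> 0"

definition classical_solution ::
  "real \<Rightarrow> (real \<Rightarrow> real) \<Rightarrow> (real \<Rightarrow> real) \<Rightarrow> (real \<Rightarrow> real) \<Rightarrow> (real \<Rightarrow> real \<Rightarrow> real) \<Rightarrow> bool" where
  "classical_solution L \<Psi> u0 u1 u \<longleftrightarrow>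
    (\<exists>ut ux utt uxx utx :: real \<Rightarrow> real \<Rightarrow> real.
      continuous_on ({0..} \<times> {0..L}) (\<lambda>p. u (fst p) (snd p)) \<and>
      continuous_on ({0..} \<times> {0..L}) (\<lambda>p. ut (fst p) (snd p)) \<and>
      continuous_on ({0..} \<times> {0..L}) (\<lambda>p. ux (fst p) (snd p)) \<and>
      (\<forall>t\<in>{0..}. \<forall>x\<in>{0..L}.
         ((\<lambda>s. u s x) has_real_derivative ut t x) (at t within {0..}) \<and>
         ((\<lambda>y. u t y) has_real_derivative ux t x) (at x within {0..L})) \<and>
      (\<forall>t\<in>{0<..}. \<forall>x\<in>{0<..<L}.
         ((\<lambda>s. ut s x) has_real_derivative utt t x) (at t) \<and>
         ((\<lambda>y. ux t y) has_real_derivative uxx t x) (at x) \<and>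
         ((\<lambda>y. ut t y) has_real_derivative utx t x) (at x) \<and>
         ((\<lambda>s. ux s x) has_real_derivative utx t x) (at t)) \<and>
      continuous_on ({0<..} \<times> {0<..<L}) (\<lambda>p. utt (fst p) (snd p)) \<and>
      continuous_on ({0<..} \<times> {0<..<L}) (\<lambda>p. uxx (fst p) (snd p)) \<and>
      continuous_on ({0<..} \<times> {0<..<L}) (\<lambda>p. utx (fst p) (snd p)) \<and>
      (\<forall>t\<in>{0<..}. \<forall>x\<in>{0<..<L}. utt t x = uxx t x - deriv \<Psi> (u t x)) \<and>
      (\<forall>t\<in>{0<..}. ux t 0 = 0 \<and> ux t L = 0) \<and>
      (\<forall>x\<in>{0..L}. u 0 x = u0 x \<and> ut 0 x = u1 x))"

end

theory Submission
  imports Defs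
begin

lemma joint_deriv:
  fixes g gt gx :: "real \<Rightarrow> real \<Rightarrow> real"
  assumes S: "open S" "(t,x) \<in> S"
   and dt: "\<And>t x. (t,x) \<in> S \<Longrightarrow> ((\<lambda>s. g s x) has_real_derivative gt t x) (at t)"
   and dx: "\<And>t x. (t,x) \<in> S \<Longrightarrow> ((\<lambda>y. g t y) has_real_derivative gx t x) (at x)"
   and c: "continuous_on S (\<lambda>p. gx (fst p) (snd p))"
  shows "((\<lambda>p. g (fst p) (snd p)) has_derivative (\<lambda>h. gt t x * fst h + gx t x * snd h)) (at (t,x))"
proof -
  obtain A B where AB: "open A" "open B" "(t,x) \<in> A \<times> B" "A \<times> B \<subseteq> S"
    using open_prod_elim[OF S] by blast
  obtain e where e: "e > 0" "ball x e \<subseteq> B" using AB openE by (metis mem_Sigma_iff)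
  define Y where "Y = ball x e"
  have sub: "A \<times> Y \<subseteq> S" using AB e Y_def by auto
  have opn: "open (A \<times> Y)" using AB Y_def by (simp add: open_Times)
  have in1: "(t,x) \<in> A \<times> Y" using AB e Y_def by auto
  have fx: "((\<lambda>s. g s x) has_derivative (\<lambda>h. gt t x * h)) (at t within A)"
    using dt[OF S(2)] by (simp add: has_field_derivative_def has_derivative_at_withinI)
  have fy: "((\<lambda>y. g s y) has_derivative blinfun_apply (blinfun_mult_left (gx s y))) (at y within Y)"
    if "s \<in> A" "y \<in> Y" for s y
  proof -
    have "(s,y) \<in> S" using sub that by auto
    from dx[OF this] have "(g s has_derivative (\<lambda>h. h * gx s y)) (at y)"
      by (simp add: has_field_derivative_def mult.commute[of _ "gx s y"])
    thus ?thesis by (simp add: has_derivative_at_withinI)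
  qed
  have cy: "continuous (at (t, x) within A \<times> Y) (\<lambda>(s, y). blinfun_mult_left (gx s y))"
  proof -
    have "continuous_on (A \<times> Y) (\<lambda>p. gx (fst p) (snd p))" using c sub continuous_on_subset by blast
    hence "continuous_on (A \<times> Y) (\<lambda>p. blinfun_mult_left (gx (fst p) (snd p)))"
      by (intro bounded_linear.continuous_on[OF bounded_linear_blinfun_mult_left])
    hence "continuous_on (A \<times> Y) (\<lambda>(s, y). blinfun_mult_left (gx s y))"
      by (simp add: case_prod_beta)
    thus ?thesis using in1 continuous_on_eq_continuous_within by blast
  qed
  have "((\<lambda>(s, y). g s y) has_derivative (\<lambda>(tx, ty). gt t x * tx + blinfun_mult_left (gx t x) ty)) (at (t, x) within A \<times> Y)"
    by (rule has_derivative_partialsI[OF fx fy cy]) (use in1 Y_def in auto)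
  hence "((\<lambda>(s, y). g s y) has_derivative (\<lambda>(tx, ty). gt t x * tx + blinfun_mult_left (gx t x) ty)) (at (t, x))"
    using at_within_open[OF in1 opn] by simp
  thus ?thesis unfolding case_prod_beta by (simp add: mult.commute)
qed

lemma path_deriv:
  fixes g :: "real \<Rightarrow> real \<Rightarrow> real"
  assumes "((\<lambda>p. g (fst p) (snd p)) has_derivative (\<lambda>h. A * fst h + B * snd h)) (at (t, c + k * t))"
  shows "((\<lambda>s. g s (c + k * s)) has_real_derivative (A + B * k)) (at t)"
proof -
  have p: "((\<lambda>s. (s, c + k * s)) has_derivative (\<lambda>h. (h, k * h))) (at t)"
    by (auto intro!: derivative_eq_intros)
  have "((\<lambda>s. g (fst (s, c + k * s)) (snd (s, c + k * s))) has_derivative (\<lambda>h. A * fst (h, k * h) + B * snd (h, k * h))) (at t)"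
    by (rule has_derivative_compose[OF p]) (use assms in simp)
  hence "((\<lambda>s. g s (c + k * s)) has_derivative (\<lambda>h. A * h + B * (k * h))) (at t)" by simp
  thus ?thesis unfolding has_field_derivative_def
    by (rule has_derivative_eq_rhs) (auto simp: algebra_simps)
qed

lemma avg_bound: fixes A B U g1 g2 c d :: real
  assumes "\<bar>A\<bar> \<le> g1 + c" "\<bar>B\<bar> \<le> g2 + c" "U = (A + B)/2" "c \<le> d"
  shows "\<bar>U\<bar> \<le> (g1 + g2)/2 + d"
proof -
  have "2 * U = A + B" using assms(3) by simp
  hence "2 * \<bar>U\<bar> \<le> g1 + g2 + 2 * d" using assms(1,2,4) by (simp add: abs_le_iff) linarith
  thus ?thesis by (simp add: field_simps)
qed

lemma int_aux: fixes f1 f2 :: "real \<Rightarrow> real"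
  assumes "f1 integrable_on {0..t}" "f2 integrable_on {0..t}" "t \<ge> 0"
  shows "integral {0..t} (\<lambda>s. (f1 s + f2 s)/2 + k) = (integral {0..t} f1 + integral {0..t} f2)/2 + k*t"
proof -
  have "((\<lambda>s. (f1 s + f2 s)/2 + k) has_integral ((integral {0..t} f1 + integral {0..t} f2)/2 + k*t)) {0..t}"
    using has_integral_add[OF has_integral_divide[OF has_integral_add[OF integrable_integral[OF assms(1)] integrable_integral[OF assms(2)]]] has_integral_const_real[of k 0 t]] assms(3)
    by (simp add: mult.commute)
  thus ?thesis by (rule integral_unique)
qed

lemma LINT_conv: fixes f :: "real \<Rightarrow> real"
  assumes "continuous_on {0..L} f"
  shows "(LINT x:{0<..<L}|lborel. f x) = integral {0..L} f"
proof -
  have si: "set_integrable lborel {0<..<L} f"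
    by (rule set_integrable_subset[OF borel_integrable_atLeastAtMost'[OF assms]]) auto
  show ?thesis using set_borel_integral_eq_integral(2)[OF si] integral_open_interval_real[of 0 L f] by simp
qed

lemma absint: fixes f :: "real \<Rightarrow> real"
  assumes "continuous_on {0..L} f" "L \<ge> 0"
  shows "integral {0..L} (\<lambda>y. \<bar>f y\<bar>) \<le> (L + integral {0..L} (\<lambda>y. (f y)\<^sup>2)) / 2"
proof -
  have i1: "(\<lambda>y. \<bar>f y\<bar>) integrable_on {0..L}"
    by (intro integrable_continuous_real continuous_intros assms)
  have i2: "(\<lambda>y. (f y)\<^sup>2) integrable_on {0..L}"
    by (intro integrable_continuous_real continuous_intros assms)
  have "integral {0..L} (\<lambda>y. \<bar>f y\<bar>) \<le> integral {0..L} (\<lambda>y. ((f y)\<^sup>2 + 1) / 2)"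
  proof (rule integral_le[OF i1])
    show "(\<lambda>y. ((f y)\<^sup>2 + 1) / 2) integrable_on {0..L}"
      by (intro integrable_continuous_real continuous_intros assms) auto
    fix y
    have "0 \<le> (\<bar>f y\<bar> - 1)\<^sup>2" by simp
    thus "\<bar>f y\<bar> \<le> ((f y)\<^sup>2 + 1) / 2" by (simp add: power2_eq_square algebra_simps)
  qed
  also have "\<dots> = (integral {0..L} (\<lambda>y. (f y)\<^sup>2) + L) / 2"
  proof -
    have "((\<lambda>y. ((f y)\<^sup>2 + 1) / 2) has_integral ((integral {0..L} (\<lambda>y. (f y)\<^sup>2) + L) / 2)) {0..L}"
      using has_integral_divide[OF has_integral_add[OF integrable_integral[OF i2] has_integral_const_real[of 1 0 L]]] assms(2)
      by simp
    thus ?thesis by (rule integral_unique)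
  qed
  finally show ?thesis by simp
qed

lemma sqrt_le_sq: "sqrt a \<le> (C::real) \<Longrightarrow> C > 0 \<Longrightarrow> a \<le> C\<^sup>2"
  by (metis less_eq_real_def real_le_rsqrt real_sqrt_le_iff sqrt_le_D)

definition zz :: "real \<Rightarrow> real \<Rightarrow> real" where
  "zz L w = L / pi * arccos (cos (pi * w / L))"

lemma zz_id: assumes "L > 0" "0 \<le> w" "w \<le> L" shows "zz L w = w"
proof -
  have "0 \<le> pi * w / L" using assms by simp
  moreover have "pi * w / L \<le> pi" using assms by (simp add: divide_le_eq)
  ultimately show ?thesis unfolding zz_def using assms by (simp add: arccos_cos)
qed

lemma zz_even: "zz L (-w) = zz L w"
  unfolding zz_def by simp

lemma zz_refl: assumes "L > 0" shows "zz L (2*L - w) = zz L w"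
proof -
  have "pi * (2*L - w) / L = 2*pi - pi * w / L" using assms by (simp add: field_simps)
  hence "cos (pi * (2*L - w) / L) = cos (pi * w / L)" by (simp add: cos_diff)
  thus ?thesis unfolding zz_def by simp
qed

lemma zz_period: "zz L (w + 2*L) = zz L w" if "L > 0"
proof -
  have "pi * (w + 2*L) / L = pi * w / L + 2*pi" using that by (simp add: field_simps)
  thus ?thesis unfolding zz_def by simp
qed

lemma zz_period_n: "L > 0 \<Longrightarrow> zz L (w + real n * (2*L)) = zz L w"
proof (induction n)
  case (Suc n)
  have "w + real (Suc n) * (2*L) = (w + real n * (2*L)) + 2*L" by (simp add: algebra_simps)
  thus ?case using Suc zz_period[of L "w + real n * (2*L)"] by (simp add: add.assoc)
qed simp

lemma zz_range: assumes "L > 0" shows "0 \<le> zz L w" "zz L w \<le> L"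
proof -
  have "0 \<le> arccos (cos (pi * w / L))" "arccos (cos (pi * w / L)) \<le> pi"
    by (auto intro: arccos_lbound arccos_ubound)
  thus "0 \<le> zz L w" "zz L w \<le> L" unfolding zz_def using assms
    by (auto simp: divide_le_eq mult.commute)
qed

lemma zz_cont: "L > 0 \<Longrightarrow> continuous_on UNIV (zz L)"
  unfolding zz_def by (intro continuous_intros) auto

locale wsol =
  fixes L C :: real and u ut ux utt uxx utx :: "real \<Rightarrow> real \<Rightarrow> real"
  assumes Lpos: "L > 0" and Cnn: "C \<ge> 0"
  and cu: "continuous_on ({0..} \<times> {0..L}) (\<lambda>p. u (fst p) (snd p))"
  and cut: "continuous_on ({0..} \<times> {0..L}) (\<lambda>p. ut (fst p) (snd p))"
  and cux: "continuous_on ({0..} \<times> {0..L}) (\<lambda>p. ux (fst p) (snd p))"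
  and d1: "\<forall>t\<in>{0..}. \<forall>x\<in>{0..L}.
         ((\<lambda>s. u s x) has_real_derivative ut t x) (at t within {0..}) \<and>
         ((\<lambda>y. u t y) has_real_derivative ux t x) (at x within {0..L})"
  and d2: "\<forall>t\<in>{0<..}. \<forall>x\<in>{0<..<L}.
         ((\<lambda>s. ut s x) has_real_derivative utt t x) (at t) \<and>
         ((\<lambda>y. ux t y) has_real_derivative uxx t x) (at x) \<and>
         ((\<lambda>y. ut t y) has_real_derivative utx t x) (at x) \<and>
         ((\<lambda>s. ux s x) has_real_derivative utx t x) (at t)"
  and cuxx: "continuous_on ({0<..} \<times> {0<..<L}) (\<lambda>p. uxx (fst p) (snd p))"
  and cutx: "continuous_on ({0<..} \<times> {0<..<L}) (\<lambda>p. utx (fst p) (snd p))"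
  and wave: "\<forall>t\<in>{0<..}. \<forall>x\<in>{0<..<L}. \<bar>utt t x - uxx t x\<bar> \<le> C"
  and bc: "\<forall>t\<in>{0..}. ux t 0 = 0 \<and> ux t L = 0"
begin

definition "a t x = ut t x + ux t x"
definition "b t x = ut t x - ux t x"

lemma opS: "open ({0<..} \<times> {0<..<L} :: (real \<times> real) set)"
  by (simp add: open_Times)

lemma jut: "t > 0 \<Longrightarrow> 0 < x \<Longrightarrow> x < L \<Longrightarrow>
  ((\<lambda>p. ut (fst p) (snd p)) has_derivative (\<lambda>h. utt t x * fst h + utx t x * snd h)) (at (t,x))"
  by (rule joint_deriv[OF opS]) (use d2 cutx in auto)

lemma jux: "t > 0 \<Longrightarrow> 0 < x \<Longrightarrow> x < L \<Longrightarrow>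
  ((\<lambda>p. ux (fst p) (snd p)) has_derivative (\<lambda>h. utx t x * fst h + uxx t x * snd h)) (at (t,x))"
  by (rule joint_deriv[OF opS]) (use d2 cuxx in auto)

lemma da: assumes "t > 0" "0 < c - t" "c - t < L"
  shows "((\<lambda>s. a s (c - s)) has_real_derivative (utt t (c-t) - uxx t (c-t))) (at t)"
proof -
  have e: "c + (-1) * s = c - s" for s :: real by simp
  have 1: "((\<lambda>s. ut s (c + (-1) * s)) has_real_derivative (utt t (c-t) + utx t (c-t) * (-1))) (at t)"
    by (rule path_deriv) (use jut[OF assms] e in simp)
  have 2: "((\<lambda>s. ux s (c + (-1) * s)) has_real_derivative (utx t (c-t) + uxx t (c-t) * (-1))) (at t)"
    by (rule path_deriv) (use jux[OF assms] e in simp)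
  have "((\<lambda>s. ut s (c - s) + ux s (c - s)) has_real_derivative
     ((utt t (c-t) + utx t (c-t) * (-1)) + (utx t (c-t) + uxx t (c-t) * (-1)))) (at t)"
    using DERIV_add[OF 1 2] by (simp add: e)
  thus ?thesis unfolding a_def by (rule DERIV_cong) simp
qed

lemma db: assumes "t > 0" "0 < c + t" "c + t < L"
  shows "((\<lambda>s. b s (c + s)) has_real_derivative (utt t (c+t) - uxx t (c+t))) (at t)"
proof -
  have e: "c + 1 * s = c + s" for s :: real by simp
  have 1: "((\<lambda>s. ut s (c + 1 * s)) has_real_derivative (utt t (c+t) + utx t (c+t) * 1)) (at t)"
    by (rule path_deriv) (use jut[OF assms] e in simp)
  have 2: "((\<lambda>s. ux s (c + 1 * s)) has_real_derivative (utx t (c+t) + uxx t (c+t) * 1)) (at t)"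
    by (rule path_deriv) (use jux[OF assms] e in simp)
  have "((\<lambda>s. ut s (c + s) - ux s (c + s)) has_real_derivative
     ((utt t (c+t) + utx t (c+t) * 1) - (utx t (c+t) + uxx t (c+t) * 1))) (at t)"
    using DERIV_diff[OF 1 2] by (simp add: e)
  thus ?thesis unfolding b_def by (rule DERIV_cong) simp
qed

lemma ca: "continuous_on ({0..} \<times> {0..L}) (\<lambda>p. a (fst p) (snd p))"
  unfolding a_def by (intro continuous_on_add cut cux)
lemma cb: "continuous_on ({0..} \<times> {0..L}) (\<lambda>p. b (fst p) (snd p))"
  unfolding b_def by (intro continuous_on_diff cut cux)

lemma segA: assumes "0 \<le> s0" "s0 \<le> s1" "0 \<le> y" "y + (s1 - s0) \<le> L"
  shows "\<bar>a s1 y - a s0 (y + (s1 - s0))\<bar> \<le> C * (s1 - s0)"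
proof (cases "s0 = s1")
  case True thus ?thesis by simp
next
  case False
  hence lt: "s0 < s1" using assms by simp
  define c where "c = y + s1"
  define \<phi> where "\<phi> s = a s (c - s)" for s
  have cont: "continuous_on {s0..s1} \<phi>"
  proof -
    have "continuous_on {s0..s1} (\<lambda>s. (s, c - s))" by (intro continuous_intros)
    moreover have "(\<lambda>s. (s, c - s)) ` {s0..s1} \<subseteq> {0..} \<times> {0..L}"
      using assms by (auto simp: c_def)
    ultimately show ?thesis unfolding \<phi>_def
      using continuous_on_compose2[OF ca, of "{s0..s1}" "\<lambda>s. (s, c - s)"] by simp
  qed
  have der: "(\<phi> has_real_derivative (utt z (c-z) - uxx z (c-z))) (at z)" if "s0 < z" "z < s1" for z
    unfolding \<phi>_def by (rule da) (use that assms in \<open>auto simp: c_def\<close>)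
  obtain l z where z: "s0 < z" "z < s1" "DERIV \<phi> z :> l" "\<phi> s1 - \<phi> s0 = (s1 - s0) * l"
    using MVT[OF lt cont] der real_differentiable_def by blast
  have "l = utt z (c-z) - uxx z (c-z)" using DERIV_unique[OF z(3) der[OF z(1,2)]] .
  moreover have "\<bar>utt z (c-z) - uxx z (c-z)\<bar> \<le> C"
    using wave z assms by (auto simp: c_def)
  ultimately have "\<bar>l\<bar> \<le> C" by simp
  hence "\<bar>\<phi> s1 - \<phi> s0\<bar> \<le> C * (s1 - s0)" using z(4) lt
    by (simp add: abs_mult mult.commute mult_right_mono)
  thus ?thesis by (simp add: \<phi>_def c_def algebra_simps)
qed

lemma segB: assumes "0 \<le> s0" "s0 \<le> s1" "y \<le> L" "0 \<le> y - (s1 - s0)"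
  shows "\<bar>b s1 y - b s0 (y - (s1 - s0))\<bar> \<le> C * (s1 - s0)"
proof (cases "s0 = s1")
  case True thus ?thesis by simp
next
  case False
  hence lt: "s0 < s1" using assms by simp
  define c where "c = y - s1"
  define \<phi> where "\<phi> s = b s (c + s)" for s
  have cont: "continuous_on {s0..s1} \<phi>"
  proof -
    have "continuous_on {s0..s1} (\<lambda>s. (s, c + s))" by (intro continuous_intros)
    moreover have "(\<lambda>s. (s, c + s)) ` {s0..s1} \<subseteq> {0..} \<times> {0..L}"
      using assms by (auto simp: c_def)
    ultimately show ?thesis unfolding \<phi>_def
      using continuous_on_compose2[OF cb, of "{s0..s1}" "\<lambda>s. (s, c + s)"] by simp
  qed
  have der: "(\<phi> has_real_derivative (utt z (c+z) - uxx z (c+z))) (at z)" if "s0 < z" "z < s1" for z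
    unfolding \<phi>_def by (rule db) (use that assms in \<open>auto simp: c_def\<close>)
  obtain l z where z: "s0 < z" "z < s1" "DERIV \<phi> z :> l" "\<phi> s1 - \<phi> s0 = (s1 - s0) * l"
    using MVT[OF lt cont] der real_differentiable_def by blast
  have "l = utt z (c+z) - uxx z (c+z)" using DERIV_unique[OF z(3) der[OF z(1,2)]] .
  moreover have "\<bar>utt z (c+z) - uxx z (c+z)\<bar> \<le> C"
    using wave z assms by (auto simp: c_def)
  ultimately have "\<bar>l\<bar> \<le> C" by simp
  hence "\<bar>\<phi> s1 - \<phi> s0\<bar> \<le> C * (s1 - s0)" using z(4) lt
    by (simp add: abs_mult mult.commute mult_right_mono)
  thus ?thesis by (simp add: \<phi>_def c_def algebra_simps)
qed

lemma bcab: "\<tau> \<ge> 0 \<Longrightarrow> a \<tau> 0 = b \<tau> 0 \<and> a \<tau> L = b \<tau> L"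
  using bc by (simp add: a_def b_def)

definition "G y = \<bar>ut 0 y\<bar> + \<bar>ux 0 y\<bar>"

definition "Ca s \<longleftrightarrow> (\<forall>y\<in>{0..L}. \<bar>a s y\<bar> \<le> G (zz L (y + s)) + C * s)"
definition "Cb s \<longleftrightarrow> (\<forall>y\<in>{0..L}. \<bar>b s y\<bar> \<le> G (zz L (y - s)) + C * s)"

lemma base: "Ca 0 \<and> Cb 0"
  unfolding Ca_def Cb_def a_def b_def G_def using zz_id[OF Lpos] by auto

lemma stepA: assumes "s' \<ge> 0" "0 \<le> h" "h \<le> L" "Ca s'" "Cb s'" "0 \<le> y" "y \<le> L"
  shows "\<bar>a (s'+h) y\<bar> \<le> G (zz L (y + (s'+h))) + C * (s'+h)"
proof (cases "y + h \<le> L")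
  case True
  have 1: "\<bar>a (s'+h) y - a s' (y + h)\<bar> \<le> C * h"
    using segA[of s' "s'+h" y] assms True by simp
  have 2: "\<bar>a s' (y+h)\<bar> \<le> G (zz L (y + h + s')) + C * s'"
    using assms(4) True assms unfolding Ca_def by auto
  show ?thesis using 1 2 by (simp add: algebra_simps)
next
  case False
  define \<tau> where "\<tau> = s' + h - (L - y)"
  have 1: "\<bar>a (s'+h) y - a \<tau> L\<bar> \<le> C * (L - y)"
    using segA[of \<tau> "s'+h" y] assms False by (simp add: \<tau>_def)
  have 2: "\<bar>b \<tau> L - b s' (2*L - h - y)\<bar> \<le> C * (\<tau> - s')"
    using segB[of s' \<tau> L] assms False by (simp add: \<tau>_def algebra_simps)
  have 3: "\<bar>b s' (2*L - h - y)\<bar> \<le> G (zz L (2*L - h - y - s')) + C * s'"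
    using assms(5) False assms unfolding Cb_def by auto
  have "zz L (2*L - h - y - s') = zz L (y + (s'+h))"
    using zz_refl[OF Lpos, of "y + (s'+h)"] by (simp add: algebra_simps)
  moreover have "a \<tau> L = b \<tau> L" using bcab assms False by (simp add: \<tau>_def)
  ultimately show ?thesis using 1 2 3 by (simp add: \<tau>_def algebra_simps)
qed

lemma stepB: assumes "s' \<ge> 0" "0 \<le> h" "h \<le> L" "Ca s'" "Cb s'" "0 \<le> y" "y \<le> L"
  shows "\<bar>b (s'+h) y\<bar> \<le> G (zz L (y - (s'+h))) + C * (s'+h)"
proof (cases "0 \<le> y - h")
  case True
  have 1: "\<bar>b (s'+h) y - b s' (y - h)\<bar> \<le> C * h"
    using segB[of s' "s'+h" y] assms True by simp
  have 2: "\<bar>b s' (y-h)\<bar> \<le> G (zz L (y - h - s')) + C * s'"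
    using assms(5) True assms unfolding Cb_def by auto
  show ?thesis using 1 2 by (simp add: algebra_simps)
next
  case False
  define \<tau> where "\<tau> = s' + h - y"
  have 1: "\<bar>b (s'+h) y - b \<tau> 0\<bar> \<le> C * y"
    using segB[of \<tau> "s'+h" y] assms False by (simp add: \<tau>_def)
  have 2: "\<bar>a \<tau> 0 - a s' (h - y)\<bar> \<le> C * (\<tau> - s')"
    using segA[of s' \<tau> 0] assms False by (simp add: \<tau>_def algebra_simps)
  have 3: "\<bar>a s' (h - y)\<bar> \<le> G (zz L (h - y + s')) + C * s'"
    using assms(4) False assms unfolding Ca_def by auto
  have "zz L (h - y + s') = zz L (y - (s'+h))"
    using zz_even[of L "y - (s'+h)"] by (simp add: algebra_simps)
  moreover have "a \<tau> 0 = b \<tau> 0" using bcab assms False by (simp add: \<tau>_def)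
  ultimately show ?thesis using 1 2 3 by (simp add: \<tau>_def algebra_simps)
qed

lemma claims_k: "\<forall>s\<in>{0..real k * L}. Ca s \<and> Cb s"
proof (induction k)
  case 0 thus ?case using base Lpos by auto
next
  case (Suc k)
  show ?case
  proof
    fix s assume s: "s \<in> {0..real (Suc k) * L}"
    show "Ca s \<and> Cb s"
    proof (cases "s \<le> real k * L")
      case True thus ?thesis using Suc s by auto
    next
      case False
      define s' where "s' = real k * L"
      have s'0: "s' \<ge> 0" "Ca s'" "Cb s'" using Suc Lpos by (auto simp: s'_def)
      have h: "0 \<le> s - s'" "s - s' \<le> L" using False s by (auto simp: s'_def algebra_simps)
      have "s = s' + (s - s')" by simp
      then show ?thesis unfolding Ca_def Cb_def
        using stepA[OF s'0(1) h s'0(2,3)] stepB[OF s'0(1) h s'0(2,3)] by (metis atLeastAtMost_iff)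
    qed
  qed
qed

lemma claims: assumes "s \<ge> 0" shows "Ca s" "Cb s"
proof -
  obtain k :: nat where "s / L \<le> k" using real_arch_simple by blast
  hence "s \<le> real k * L" using Lpos by (simp add: divide_le_eq)
  thus "Ca s" "Cb s" using claims_k[of k] assms by auto
qed

lemma cG: "continuous_on {0..L} G"
proof -
  have m: "(\<lambda>y. (0::real, y)) ` {0..L} \<subseteq> {0..} \<times> {0..L}" by auto
  have "continuous_on {0..L} (\<lambda>y. (0::real, y))" by (intro continuous_intros)
  hence c1: "continuous_on {0..L} (\<lambda>y. ut 0 y)" and c2: "continuous_on {0..L} (\<lambda>y. ux 0 y)"
    using continuous_on_compose2[OF cut _ m] continuous_on_compose2[OF cux _ m] by auto
  show ?thesis unfolding G_def by (intro continuous_intros c1 c2)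
qed

lemma cGz: "continuous_on S (\<lambda>w. G (zz L w))"
proof -
  have "continuous_on S (zz L)" using zz_cont[OF Lpos] continuous_on_subset by blast
  moreover have "zz L ` S \<subseteq> {0..L}" using zz_range[OF Lpos] by auto
  ultimately show ?thesis using continuous_on_compose2[OF cG] by blast
qed

lemma Gnn: "G y \<ge> 0" unfolding G_def by simp

lemma u_bound: assumes "t \<ge> 0" "0 \<le> x" "x \<le> L"
  shows "\<bar>u t x\<bar> \<le> \<bar>u 0 x\<bar> + (integral {0..t} (\<lambda>s. G (zz L (x + s))) + integral {0..t} (\<lambda>s. G (zz L (x - s)))) / 2 + C * t * t"
proof -
  have "((\<lambda>s. ut s x) has_integral (u t x - u 0 x)) {0..t}"
  proof (rule fundamental_theorem_of_calculus[OF assms(1)])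
    fix s assume s: "s \<in> {0..t}"
    hence "((\<lambda>s. u s x) has_real_derivative ut s x) (at s within {0..})" using d1 assms by auto
    hence "((\<lambda>s. u s x) has_real_derivative ut s x) (at s within {0..t})"
      by (rule DERIV_subset) auto
    thus "((\<lambda>s. u s x) has_vector_derivative ut s x) (at s within {0..t})"
      by (simp add: has_real_derivative_iff_has_vector_derivative)
  qed
  hence I: "u t x - u 0 x = integral {0..t} (\<lambda>s. ut s x)" "(\<lambda>s. ut s x) integrable_on {0..t}"
    by (auto simp: integral_unique has_integral_integrable)
  define g where "g s = (G (zz L (x + s)) + G (zz L (x - s))) / 2 + C * t" for s
  have gi: "g integrable_on {0..t}" unfolding g_def
    by (intro integrable_continuous_real continuous_intros cGz[unfolded o_def]
        continuous_on_compose2[OF cGz, of _ "\<lambda>s. x + s"] continuous_on_compose2[OF cGz, of _ "\<lambda>s. x - s"]) auto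
  have bd: "\<bar>ut s x\<bar> \<le> g s" if "s \<in> {0..t}" for s
  proof -
    have "Ca s" "Cb s" using claims that by auto
    hence "\<bar>a s x\<bar> \<le> G (zz L (x + s)) + C * s" "\<bar>b s x\<bar> \<le> G (zz L (x - s)) + C * s"
      using assms unfolding Ca_def Cb_def by auto
    moreover have "ut s x = (a s x + b s x) / 2" by (simp add: a_def b_def)
    moreover have "C * s \<le> C * t" using that Cnn by (simp add: mult_left_mono)
    ultimately have "\<bar>ut s x\<bar> \<le> (G (zz L (x + s)) + G (zz L (x - s))) / 2 + C * t"
      by (rule avg_bound)
    thus ?thesis unfolding g_def .
  qed
  have "integral {0..t} (\<lambda>s. ut s x) \<le> integral {0..t} g"
    by (rule integral_le[OF I(2) gi]) (use bd in force)
  moreover have "- integral {0..t} (\<lambda>s. ut s x) \<le> integral {0..t} g"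
    using integral_le[OF integrable_neg[OF I(2)] gi, of] bd by (force simp: abs_le_iff)
  moreover have G1: "(\<lambda>s. G (zz L (x + s))) integrable_on {0..t}"
    by (intro integrable_continuous_real continuous_on_compose2[OF cGz, of _ "\<lambda>s. x + s"] continuous_intros) auto
  moreover have G2: "(\<lambda>s. G (zz L (x - s))) integrable_on {0..t}"
    by (intro integrable_continuous_real continuous_on_compose2[OF cGz, of _ "\<lambda>s. x - s"] continuous_intros) auto
  moreover have "integral {0..t} g = (integral {0..t} (\<lambda>s. G (zz L (x + s))) + integral {0..t} (\<lambda>s. G (zz L (x - s)))) / 2 + C * t * t"
    unfolding g_def using int_aux[OF G1 G2 assms(1)] by simp
  ultimately show ?thesis using I(1) by (simp add: abs_le_iff) linarith
qed

definition "Hf w = G (zz L w)"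

lemma Hc: "continuous_on S Hf" unfolding Hf_def using cGz .
lemma Hint: "Hf integrable_on {p..q}" by (rule integrable_continuous_real[OF Hc])
lemma Hnn: "Hf w \<ge> 0" unfolding Hf_def by (rule Gnn)

lemma P1: "integral {- L..L} Hf = 2 * integral {0..L} (\<lambda>y. G y)"
proof -
  have "integral {- L..L} Hf = integral {- L..0} Hf + integral {0..L} Hf"
    using Henstock_Kurzweil_Integration.integral_combine[of "-L" 0 L Hf] Lpos Hint by simp
  moreover have "integral {- L..0} Hf = integral {0..L} Hf"
  proof -
    have "(Hf has_integral integral {- L..0} Hf) {- L..0}" using Hint by (simp add: integrable_integral)
    hence "((\<lambda>x. Hf (-x)) has_integral integral {- L..0} Hf) {-0..-(-L)}"
      using has_integral_reflect_real[where f=Hf and a="-L" and b=0] by simp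
    moreover have "(\<lambda>x. Hf (-x)) = Hf" by (rule ext) (simp add: Hf_def zz_even)
    ultimately show ?thesis by (simp add: integral_unique)
  qed
  moreover have "integral {0..L} Hf = integral {0..L} G"
    by (rule integral_cong) (simp add: Hf_def zz_id[OF Lpos])
  ultimately show ?thesis by simp
qed

lemma P2: "integral {- L..-L + real N * (2*L)} Hf = real N * integral {- L..L} Hf"
proof (induction N)
  case 0 thus ?case by simp
next
  case (Suc N)
  define c where "c = real N * (2*L)"
  have "integral {- L..-L + real (Suc N) * (2*L)} Hf = integral {- L..-L + c} Hf + integral {- L + c..-L + c + 2*L} Hf"
    using Henstock_Kurzweil_Integration.integral_combine[of "-L" "-L + c" "-L + c + 2*L" Hf] Lpos Hint
    by (simp add: c_def algebra_simps)
  moreover have "integral {- L + c..-L + c + 2*L} Hf = integral {- L..L} Hf"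
  proof -
    have "integral {(-L + c) - c..(L + c) - c} (\<lambda>x. Hf (x + c)) = integral {- L + c..L + c} Hf"
      by (rule integral_shift_real_ivl)
    moreover have "(\<lambda>x. Hf (x + c)) = Hf" by (rule ext) (simp add: Hf_def c_def zz_period_n[OF Lpos])
    ultimately show ?thesis by (simp add: algebra_simps)
  qed
  ultimately show ?case using Suc by (simp add: c_def algebra_simps)
qed

lemma P3: assumes "-L \<le> p" "p \<le> q" "q \<le> -L + real N * (2*L)"
  shows "integral {p..q} Hf \<le> real N * (2 * integral {0..L} G)"
proof -
  have "integral {p..q} Hf \<le> integral {- L..-L + real N * (2*L)} Hf"
    by (rule integral_subset_le) (use assms Hint Hnn in auto)
  thus ?thesis using P2 P1 by simp
qed

lemma u_bound2: assumes "t \<ge> 0" "0 \<le> x" "x \<le> L" "t + 2*L \<le> real N * (2*L)"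
  shows "\<bar>u t x\<bar> \<le> \<bar>u 0 x\<bar> + real N * (2 * integral {0..L} G) + C * t * t"
proof -
  have "integral {0..t} (\<lambda>s. G (zz L (x + s))) = integral {x..t+x} Hf"
    using integral_shift_real_ivl[where f=Hf and a=x and b="t+x" and c=x] by (simp add: Hf_def add.commute)
  also have "\<dots> \<le> real N * (2 * integral {0..L} G)"
    by (rule P3) (use assms Lpos in auto)
  finally have 1: "integral {0..t} (\<lambda>s. G (zz L (x + s))) \<le> real N * (2 * integral {0..L} G)" .
  have "integral {0..t} (\<lambda>s. G (zz L (x - s))) = integral {0..t} (\<lambda>s. Hf (s + (-x)))"
    by (rule integral_cong) (metis Hf_def zz_even minus_diff_eq add_uminus_conv_diff)
  also have "\<dots> = integral {- x..t + -x} Hf"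
    using integral_shift_real_ivl[where f=Hf and a="-x" and b="t + -x" and c="-x"] by simp
  also have "\<dots> \<le> real N * (2 * integral {0..L} G)"
    by (rule P3) (use assms Lpos in auto)
  finally have 2: "integral {0..t} (\<lambda>s. G (zz L (x - s))) \<le> real N * (2 * integral {0..L} G)" .
  show ?thesis using u_bound[OF assms(1-3)] 1 2 by (simp add: field_simps)
qed

lemma c_u0: "continuous_on {0..L} (\<lambda>y. u 0 y)"
  and c_ut0: "continuous_on {0..L} (\<lambda>y. ut 0 y)"
  and c_ux0: "continuous_on {0..L} (\<lambda>y. ux 0 y)"
proof -
  have m: "(\<lambda>y. (0::real, y)) ` {0..L} \<subseteq> {0..} \<times> {0..L}" by auto
  have "continuous_on {0..L} (\<lambda>y. (0::real, y))" by (intro continuous_intros)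
  thus "continuous_on {0..L} (\<lambda>y. u 0 y)" "continuous_on {0..L} (\<lambda>y. ut 0 y)" "continuous_on {0..L} (\<lambda>y. ux 0 y)"
    using continuous_on_compose2[OF cu _ m] continuous_on_compose2[OF cut _ m]
      continuous_on_compose2[OF cux _ m] by auto
qed

lemma G_bound: assumes "integral {0..L} (\<lambda>y. (ut 0 y)\<^sup>2) \<le> C\<^sup>2" "integral {0..L} (\<lambda>y. (ux 0 y)\<^sup>2) \<le> C\<^sup>2"
  shows "integral {0..L} G \<le> L + C\<^sup>2"
proof -
  have "integral {0..L} G = integral {0..L} (\<lambda>y. \<bar>ut 0 y\<bar>) + integral {0..L} (\<lambda>y. \<bar>ux 0 y\<bar>)"
    unfolding G_def
    by (rule integral_add; intro integrable_continuous_real continuous_intros c_ut0 c_ux0)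
  also have "\<dots> \<le> (L + integral {0..L} (\<lambda>y. (ut 0 y)\<^sup>2)) / 2 + (L + integral {0..L} (\<lambda>y. (ux 0 y)\<^sup>2)) / 2"
    using absint[OF c_ut0] absint[OF c_ux0] Lpos by (intro add_mono) auto
  also have "\<dots> \<le> (L + C\<^sup>2) / 2 + (L + C\<^sup>2) / 2" using assms by (intro add_mono divide_right_mono) auto
  also have "\<dots> = L + C\<^sup>2" by simp
  finally show ?thesis .
qed

lemma sob1: assumes "0 \<le> p" "p \<le> q" "q \<le> L"
  shows "\<bar>u 0 q - u 0 p\<bar> \<le> integral {0..L} (\<lambda>z. \<bar>ux 0 z\<bar>)"
proof -
  have "((\<lambda>z. ux 0 z) has_integral (u 0 q - u 0 p)) {p..q}"
  proof (rule fundamental_theorem_of_calculus[OF assms(2)])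
    fix z assume z: "z \<in> {p..q}"
    hence "((\<lambda>y. u 0 y) has_real_derivative ux 0 z) (at z within {0..L})" using d1 assms by auto
    hence "((\<lambda>y. u 0 y) has_real_derivative ux 0 z) (at z within {p..q})"
      by (rule DERIV_subset) (use assms in auto)
    thus "((\<lambda>y. u 0 y) has_vector_derivative ux 0 z) (at z within {p..q})"
      by (simp add: has_real_derivative_iff_has_vector_derivative)
  qed
  hence I: "u 0 q - u 0 p = integral {p..q} (\<lambda>z. ux 0 z)" "(\<lambda>z. ux 0 z) integrable_on {p..q}"
    by (auto simp: integral_unique has_integral_integrable)
  have ia: "(\<lambda>z. \<bar>ux 0 z\<bar>) integrable_on {p..q}"
    by (intro integrable_continuous_real continuous_intros continuous_on_subset[OF c_ux0]) (use assms in auto)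
  have "\<bar>integral {p..q} (\<lambda>z. ux 0 z)\<bar> \<le> integral {p..q} (\<lambda>z. \<bar>ux 0 z\<bar>)"
  proof -
    have "integral {p..q} (\<lambda>z. ux 0 z) \<le> integral {p..q} (\<lambda>z. \<bar>ux 0 z\<bar>)"
      by (rule integral_le[OF I(2) ia]) simp
    moreover have "integral {p..q} (\<lambda>z. - ux 0 z) \<le> integral {p..q} (\<lambda>z. \<bar>ux 0 z\<bar>)"
      by (rule integral_le[OF integrable_neg[OF I(2)] ia]) simp
    ultimately show ?thesis by (simp add: abs_le_iff)
  qed
  also have "\<dots> \<le> integral {0..L} (\<lambda>z. \<bar>ux 0 z\<bar>)"
    by (rule integral_subset_le) (use assms ia in \<open>auto intro!: integrable_continuous_real continuous_intros c_ux0\<close>)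
  finally show ?thesis using I(1) by simp
qed

lemma sob2: assumes "0 \<le> x" "x \<le> L"
  shows "L * \<bar>u 0 x\<bar> \<le> integral {0..L} (\<lambda>y. \<bar>u 0 y\<bar>) + L * integral {0..L} (\<lambda>z. \<bar>ux 0 z\<bar>)"
proof -
  define I where "I = integral {0..L} (\<lambda>z. \<bar>ux 0 z\<bar>)"
  have pt: "\<bar>u 0 x\<bar> \<le> \<bar>u 0 y\<bar> + I" if "y \<in> {0..L}" for y
  proof (cases "x \<le> y")
    case True thus ?thesis using sob1[of x y] assms that unfolding I_def by auto
  next
    case False thus ?thesis using sob1[of y x] assms that unfolding I_def by auto
  qed
  have "integral {0..L} (\<lambda>y. \<bar>u 0 x\<bar>) \<le> integral {0..L} (\<lambda>y. \<bar>u 0 y\<bar> + I)"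
    by (rule integral_le) (use pt in \<open>auto intro!: integrable_continuous_real continuous_intros c_u0\<close>)
  moreover have "integral {0..L} (\<lambda>y. \<bar>u 0 y\<bar> + I) = integral {0..L} (\<lambda>y. \<bar>u 0 y\<bar>) + L * I"
    using integral_add[of "\<lambda>y. \<bar>u 0 y\<bar>" "{0..L}" "\<lambda>y. I"] Lpos
    by (auto intro!: integrable_continuous_real continuous_intros c_u0)
  ultimately show ?thesis using Lpos by (simp add: I_def mult.commute)
qed

lemma u0_bound: assumes "integral {0..L} (\<lambda>y. (u 0 y)\<^sup>2) \<le> C\<^sup>2" "integral {0..L} (\<lambda>y. (ux 0 y)\<^sup>2) \<le> C\<^sup>2"
  "0 \<le> x" "x \<le> L"
  shows "\<bar>u 0 x\<bar> \<le> (L + C\<^sup>2) / (2*L) + (L + C\<^sup>2) / 2"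
proof -
  have a1: "integral {0..L} (\<lambda>y. \<bar>u 0 y\<bar>) \<le> (L + C\<^sup>2) / 2"
    using absint[OF c_u0] Lpos assms(1) by fastforce
  have a2: "integral {0..L} (\<lambda>y. \<bar>ux 0 y\<bar>) \<le> (L + C\<^sup>2) / 2"
    using absint[OF c_ux0] Lpos assms(2) by fastforce
  have "L * \<bar>u 0 x\<bar> \<le> (L + C\<^sup>2) / 2 + L * ((L + C\<^sup>2) / 2)"
    using sob2[OF assms(3,4)] a1 a2 Lpos by (smt (verit) mult_left_mono)
  hence "\<bar>u 0 x\<bar> \<le> ((L + C\<^sup>2) / 2 + L * ((L + C\<^sup>2) / 2)) / L"
    using Lpos by (simp add: le_divide_eq mult.commute)
  also have "\<dots> = (L + C\<^sup>2) / (2*L) + (L + C\<^sup>2) / 2" using Lpos by (simp add: field_simps)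
  finally show ?thesis .
qed

end


lemma deriv0_eq: fixes f g :: "real \<Rightarrow> real"
  assumes "L > 0" "x = 0 \<or> x = L"
    "(f has_real_derivative A) (at x within {0..L})" "(g has_real_derivative B) (at x within {0..L})"
    "\<forall>y\<in>{0..L}. f y = g y"
  shows "A = B"
proof -
  have "(g has_real_derivative A) (at x within {0..L})"
    by (rule has_field_derivative_transform_within[OF assms(3) zero_less_one]) (use assms in auto)
  moreover have "at x within {0..L} \<noteq> bot"
    using assms(1,2) at_within_Icc_at_right[of 0 L] at_within_Icc_at_left[of 0 L]
      trivial_limit_at_right_real[of 0] trivial_limit_at_left_real[of L] by (auto simp: trivial_limit_def)
  ultimately show ?thesis using has_field_derivative_unique assms(4) by blast
qed

theorem lemma3p5:
  fixes L C :: real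
    and \<Phi> u0 u1 :: "real \<Rightarrow> real"
    and u0s u1s \<Phi>s :: "nat \<Rightarrow> real \<Rightarrow> real"
    and u :: "nat \<Rightarrow> real \<Rightarrow> real \<Rightarrow> real"
  assumes L_pos: "L > 0"
    and Phi_cont: "continuous_on UNIV \<Phi>"
    and Phi_diff: "\<forall>x. x \<notin> {-1, 1} \<longrightarrow> \<Phi> differentiable (at x)"
    and Phi_C1: "continuous_on (UNIV - {-1, 1}) (deriv \<Phi>)"
    and Phi_const_left: "\<forall>x \<le> -1. \<Phi> x = \<Phi> (-1)"
    and Phi_const_right: "\<forall>x \<ge> 1. \<Phi> x = \<Phi> 1"
    and Phi_convex: "convex_on {-1..1} \<Phi>"
    and Phi_decr: "antimono_on {-1..0} \<Phi>"
    and Phi_incr: "mono_on {0..1} \<Phi>"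
    and u0_H1: "in_H1 L u0"
    and u1_L2: "in_L2 L u1"
    and u0s_smooth: "\<forall>n. smooth_on {0..L} (u0s n)"
    and u1s_smooth: "\<forall>n. smooth_on {0..L} (u1s n)"
    and Phis_smooth: "\<forall>n. smooth_on UNIV (\<Phi>s n)"
    and u0s_conv: "H1_converges L u0s u0"
    and u1s_conv: "L2_converges L u1s u1"
    and Phis_unif: "uniform_limit UNIV \<Phi>s \<Phi> sequentially"
    and dPhis_pointwise: "\<forall>x. x \<notin> {-1, 1} \<longrightarrow> (\<lambda>n. deriv (\<Phi>s n) x) \<longlonglongrightarrow> deriv \<Phi> x"
    and dPhis_unif: "\<forall>\<epsilon>>0. uniform_limit
           (UNIV - ({-1-\<epsilon><..<-1+\<epsilon>} \<union> {1-\<epsilon><..<1+\<epsilon>}))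
           (\<lambda>n. deriv (\<Phi>s n)) (deriv \<Phi>) sequentially"
    and dPhis_zero: "\<forall>\<epsilon>>0. \<forall>n. \<forall>v. \<bar>v\<bar> \<ge> 1 + \<epsilon> \<longrightarrow> deriv (\<Phi>s n) v = 0"
    and C_pos: "C > 0"
    and u0s_bound: "\<forall>n. H1_norm_smooth L (u0s n) \<le> C"
    and u1s_bound: "\<forall>n. L2_norm L (u1s n) \<le> C"
    and Phis_bound: "\<forall>n. \<forall>v. 0 \<le> \<Phi>s n v \<and> \<Phi>s n v \<le> C"
    and dPhis_bound: "\<forall>n. \<forall>v. \<bar>deriv (\<Phi>s n) v\<bar> \<le> C"
    and u0s_bc: "\<forall>n. ((u0s n) has_real_derivative 0) (at 0 within {0..L}) \<and>
                     ((u0s n) has_real_derivative 0) (at L within {0..L})"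
    and u1s_bc: "\<forall>n. u1s n 0 = 0 \<and> u1s n L = 0"
    and u_sol: "\<forall>n. classical_solution L (\<Phi>s n) (u0s n) (u1s n) (u n)"
  shows "\<forall>T>0. \<exists>M. \<forall>n. \<forall>t\<in>{0<..<T}. \<forall>x\<in>{0<..<L}. \<bar>u n t x\<bar> \<le> M"
proof (intro allI impI)
  fix T :: real assume T: "T > 0"
  obtain N :: nat where N0: "(T + 2*L) / (2*L) \<le> real N" using real_arch_simple by blast
  hence N: "T + 2*L \<le> real N * (2*L)" using L_pos by (simp add: divide_le_eq)
  define K where "K = L + C\<^sup>2"
  define M where "M = K / (2*L) + K / 2 + real N * (2*K) + C * T * T"
  show "\<exists>M. \<forall>n. \<forall>t\<in>{0<..<T}. \<forall>x\<in>{0<..<L}. \<bar>u n t x\<bar> \<le> M"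
  proof (intro exI allI ballI)
    fix n t x assume t: "t \<in> {0<..<T}" and x: "x \<in> {0<..<L}"
    obtain ut ux utt uxx utx :: "real \<Rightarrow> real \<Rightarrow> real" where
      s1: "continuous_on ({0..} \<times> {0..L}) (\<lambda>p. u n (fst p) (snd p))" and
      s2: "continuous_on ({0..} \<times> {0..L}) (\<lambda>p. ut (fst p) (snd p))" and
      s3: "continuous_on ({0..} \<times> {0..L}) (\<lambda>p. ux (fst p) (snd p))" and
      s4: "\<forall>t\<in>{0..}. \<forall>x\<in>{0..L}.
         ((\<lambda>s. u n s x) has_real_derivative ut t x) (at t within {0..}) \<and>
         ((\<lambda>y. u n t y) has_real_derivative ux t x) (at x within {0..L})" and
      s5: "\<forall>t\<in>{0<..}. \<forall>x\<in>{0<..<L}.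
         ((\<lambda>s. ut s x) has_real_derivative utt t x) (at t) \<and>
         ((\<lambda>y. ux t y) has_real_derivative uxx t x) (at x) \<and>
         ((\<lambda>y. ut t y) has_real_derivative utx t x) (at x) \<and>
         ((\<lambda>s. ux s x) has_real_derivative utx t x) (at t)" and
      s6: "continuous_on ({0<..} \<times> {0<..<L}) (\<lambda>p. utt (fst p) (snd p))" and
      s7: "continuous_on ({0<..} \<times> {0<..<L}) (\<lambda>p. uxx (fst p) (snd p))" and
      s8: "continuous_on ({0<..} \<times> {0<..<L}) (\<lambda>p. utx (fst p) (snd p))" and
      s9: "\<forall>t\<in>{0<..}. \<forall>x\<in>{0<..<L}. utt t x = uxx t x - deriv (\<Phi>s n) (u n t x)" and
      s10: "\<forall>t\<in>{0<..}. ux t 0 = 0 \<and> ux t L = 0" and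
      s11: "\<forall>x\<in>{0..L}. u n 0 x = u0s n x \<and> ut 0 x = u1s n x"
      using u_sol unfolding classical_solution_def by blast
    have bc0: "ux 0 0 = 0 \<and> ux 0 L = 0"
    proof -
      have "\<forall>y\<in>{0..L}. u n 0 y = u0s n y" using s11 by auto
      thus ?thesis using deriv0_eq[OF L_pos, of 0 "\<lambda>y. u n 0 y" "ux 0 0" "u0s n" 0]
          deriv0_eq[OF L_pos, of L "\<lambda>y. u n 0 y" "ux 0 L" "u0s n" 0] s4 u0s_bc L_pos by auto
    qed
    interpret W: wsol L C "u n" ut ux utt uxx utx
    proof
      show "\<forall>t\<in>{0<..}. \<forall>x\<in>{0<..<L}. \<bar>utt t x - uxx t x\<bar> \<le> C"
        using s9 dPhis_bound by auto
      show "\<forall>t\<in>{0..}. ux t 0 = 0 \<and> ux t L = 0"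
        using s10 bc0 by (metis atLeast_iff greaterThan_iff less_eq_real_def)
    qed (use L_pos C_pos s1 s2 s3 s4 s5 s7 s8 in auto)
    have cut2: "continuous_on {0..L} (\<lambda>y. (ut 0 y)\<^sup>2)" by (intro continuous_intros W.c_ut0)
    have cux2: "continuous_on {0..L} (\<lambda>y. (ux 0 y)\<^sup>2)" by (intro continuous_intros W.c_ux0)
    have cu2: "continuous_on {0..L} (\<lambda>y. (u n 0 y)\<^sup>2)" by (intro continuous_intros W.c_u0)
    have A1: "integral {0..L} (\<lambda>y. (ut 0 y)\<^sup>2) \<le> C\<^sup>2"
    proof -
      have "(LINT y:{0<..<L}|lborel. (u1s n y)\<^sup>2) \<le> C\<^sup>2"
        using sqrt_le_sq u1s_bound C_pos unfolding L2_norm_def by blast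
      moreover have "(LINT y:{0<..<L}|lborel. (u1s n y)\<^sup>2) = (LINT y:{0<..<L}|lborel. (ut 0 y)\<^sup>2)"
        by (rule set_lebesgue_integral_cong) (use s11 in auto)
      ultimately show ?thesis using LINT_conv[OF cut2] by simp
    qed
    have A23: "integral {0..L} (\<lambda>y. (u n 0 y)\<^sup>2) + integral {0..L} (\<lambda>y. (ux 0 y)\<^sup>2) \<le> C\<^sup>2"
    proof -
      have "(LINT y:{0<..<L}|lborel. (u0s n y)\<^sup>2 + (deriv (u0s n) y)\<^sup>2) \<le> C\<^sup>2"
        using sqrt_le_sq u0s_bound C_pos unfolding H1_norm_smooth_def by blast
      moreover have "(LINT y:{0<..<L}|lborel. (u0s n y)\<^sup>2 + (deriv (u0s n) y)\<^sup>2) =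
          (LINT y:{0<..<L}|lborel. (u n 0 y)\<^sup>2 + (ux 0 y)\<^sup>2)"
      proof (rule set_lebesgue_integral_cong)
        show "{0<..<L} \<in> sets lborel" by simp
        show "\<forall>y. y \<in> {0<..<L} \<longrightarrow> (u0s n y)\<^sup>2 + (deriv (u0s n) y)\<^sup>2 = (u n 0 y)\<^sup>2 + (ux 0 y)\<^sup>2"
        proof (intro allI impI)
          fix y :: real assume y: "y \<in> {0<..<L}"
          have "((\<lambda>z. u n 0 z) has_real_derivative ux 0 y) (at y within {0..L})" using s4 y by auto
          hence "((\<lambda>z. u n 0 z) has_real_derivative ux 0 y) (at y)"
            using at_within_Icc_at[of 0 y L] y by auto
          hence "(u0s n has_real_derivative ux 0 y) (at y)"
            by (rule has_field_derivative_transform_within_open[of _ _ _ "{0<..<L}"]) (use y s11 in auto)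
          hence "deriv (u0s n) y = ux 0 y" by (rule DERIV_imp_deriv)
          thus "(u0s n y)\<^sup>2 + (deriv (u0s n) y)\<^sup>2 = (u n 0 y)\<^sup>2 + (ux 0 y)\<^sup>2" using s11 y by auto
        qed
      qed
      moreover have "(LINT y:{0<..<L}|lborel. (u n 0 y)\<^sup>2 + (ux 0 y)\<^sup>2) =
          integral {0..L} (\<lambda>y. (u n 0 y)\<^sup>2) + integral {0..L} (\<lambda>y. (ux 0 y)\<^sup>2)"
      proof -
        have "continuous_on {0..L} (\<lambda>y. (u n 0 y)\<^sup>2 + (ux 0 y)\<^sup>2)" by (intro continuous_on_add cu2 cux2)
        from LINT_conv[OF this] show ?thesis
          using integral_add[OF integrable_continuous_real[OF cu2] integrable_continuous_real[OF cux2]] by simp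
      qed
      ultimately show ?thesis by simp
    qed
    have nn1: "integral {0..L} (\<lambda>y. (u n 0 y)\<^sup>2) \<ge> 0"
      by (rule integral_nonneg) (auto intro: integrable_continuous_real[OF cu2])
    have nn2: "integral {0..L} (\<lambda>y. (ux 0 y)\<^sup>2) \<ge> 0"
      by (rule integral_nonneg) (auto intro: integrable_continuous_real[OF cux2])
    have A2: "integral {0..L} (\<lambda>y. (u n 0 y)\<^sup>2) \<le> C\<^sup>2" using A23 nn2 by linarith
    have A3: "integral {0..L} (\<lambda>y. (ux 0 y)\<^sup>2) \<le> C\<^sup>2" using A23 nn1 by linarith
    have t0: "t \<ge> 0" "t \<le> T" using t by auto
    have ub: "\<bar>u n t x\<bar> \<le> \<bar>u n 0 x\<bar> + real N * (2 * integral {0..L} W.G) + C * t * t"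
      by (rule W.u_bound2) (use t x N in auto)
    have u0b: "\<bar>u n 0 x\<bar> \<le> K / (2*L) + K / 2"
      using W.u0_bound[OF A2 A3] x unfolding K_def by auto
    have Gb: "real N * (2 * integral {0..L} W.G) \<le> real N * (2 * K)"
      using W.G_bound[OF A1 A3] unfolding K_def by (intro mult_left_mono) auto
    have "C * t * t \<le> C * T * T" using t0 C_pos by (simp add: mult_mono)
    thus "\<bar>u n t x\<bar> \<le> M" using ub u0b Gb unfolding M_def by linarith
  qed
qed

end
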